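(* Let $N\ge1$ and let $\Upsilon_N:=\{\alpha\in\mathbb N_0^s:\prod_{j=1}^s(\alpha_j+1)\le N\}$ (the hyperbolic cross of order $N$). Then $\Upsilon_N$ is a minimal monomial degree reducing universal interpolation set of order $N$: it is a monomial degree reducing universal interpolation set of order $N$, and every monomial degree reducing universal interpolation set of order $N$ contains $\Upsilon_N$.
   Context: $\Pi=\mathbb C[x_1,\dots,x_s]$, $\deg$ is total degree with $\deg 0<0$. For $A\subset\mathbb N_0^s$, $\Pi_A$ is the span of the monomials $x^\alpha$, $\alpha\in A$. A subspace $\mathcal P\subseteq\Pi$ is a degree reducing universal interpolation space of order $N$ if for every finite $X\subset\mathbb C^s$ with $\#X\le N$ and every $q\in\Pi$ there is $p\in\mathcal P$ with $p|_X=q|_X$ and $\deg p\le\deg q$. A set $A\subset\mathbb N_0^s$ is a monomial degree reducing universal interpolation set of order $N$ if $\Pi_A$ is a degree reducing universal interpolation space of order $N$. *)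

theory Defs
  imports Complex_Main "HOL-Library.Poly_Mapping"
begin

text \<open>Polynomials in C[x_j : j in 'n] ('n a finite type, s = CARD('n)) are finitely
  supported coefficient maps from exponent vectors ('n => nat) to complex numbers.\<close>

type_synonym 'n mpoly = "('n \<Rightarrow> nat) \<Rightarrow>\<^sub>0 complex"

definition mpoly_eval :: "'n::finite mpoly \<Rightarrow> ('n \<Rightarrow> complex) \<Rightarrow> complex" where
  "mpoly_eval p x = (\<Sum>\<alpha>\<in>Poly_Mapping.keys p. Poly_Mapping.lookup p \<alpha> * (\<Prod>j\<in>UNIV. x j ^ \<alpha> j))"

text \<open>Total degree, with deg 0 = -1 < 0.\<close>
definition mpoly_deg :: "'n::finite mpoly \<Rightarrow> int" where
  "mpoly_deg p = (if p = 0 then -1 else int (Max ((\<lambda>\<alpha>. \<Sum>j\<in>UNIV. \<alpha> j) ` Poly_Mapping.keys p)))"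

definition monomial_span :: "('n::finite \<Rightarrow> nat) set \<Rightarrow> 'n mpoly set" where
  "monomial_span A = {p. Poly_Mapping.keys p \<subseteq> A}"

definition deg_red_univ_interp_space :: "'n::finite mpoly set \<Rightarrow> nat \<Rightarrow> bool" where
  "deg_red_univ_interp_space P N \<longleftrightarrow>
     (\<forall>X :: ('n \<Rightarrow> complex) set. finite X \<and> card X \<le> N \<longrightarrow>
        (\<forall>q. \<exists>p\<in>P. (\<forall>x\<in>X. mpoly_eval p x = mpoly_eval q x) \<and> mpoly_deg p \<le> mpoly_deg q))"

definition monomial_deg_red_univ_interp_set :: "('n::finite \<Rightarrow> nat) set \<Rightarrow> nat \<Rightarrow> bool" where
  "monomial_deg_red_univ_interp_set A N \<longleftrightarrow> deg_red_univ_interp_space (monomial_span A) N"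

definition hyperbolic_cross :: "nat \<Rightarrow> ('n::finite \<Rightarrow> nat) set" where
  "hyperbolic_cross N = {\<alpha>. (\<Prod>j\<in>UNIV. \<alpha> j + 1) \<le> N}"

end

theory Submission imports Defs "HOL-Library.Function_Algebras" "HOL-Library.List_Lexorder" "HOL-Library.FuncSet" "HOL-Analysis.Complex_Transcendental"
begin

definition mon :: "('n::finite \<Rightarrow> nat) \<Rightarrow> ('n \<Rightarrow> complex) \<Rightarrow> complex" where
  "mon \<alpha> x = (\<Prod>j\<in>UNIV. x j ^ \<alpha> j)"

definition mdeg :: "('n::finite \<Rightarrow> nat) \<Rightarrow> nat" where
  "mdeg \<alpha> = (\<Sum>j\<in>UNIV. \<alpha> j)"

definition enm :: "'n::finite list" where
  "enm = (SOME xs. set xs = UNIV \<and> distinct xs)"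

lemma set_enm: "set (enm :: 'n::finite list) = UNIV"
  unfolding enm_def by (rule someI2_ex) (use finite_distinct_list[of "UNIV :: 'n set"] in auto)

definition key :: "('n::finite \<Rightarrow> nat) \<Rightarrow> nat list" where
  "key \<alpha> = mdeg \<alpha> # map \<alpha> enm"

definition lt :: "('n::finite \<Rightarrow> nat) \<Rightarrow> ('n \<Rightarrow> nat) \<Rightarrow> bool" where
  "lt a b \<longleftrightarrow> key a < key b"

lemma key_inj: "key a = key b \<Longrightarrow> a = b"
  unfolding key_def using set_enm by (auto simp: map_eq_conv)

lemma lt_deg: "lt a b \<Longrightarrow> mdeg a \<le> mdeg b"
  unfolding lt_def key_def by auto

lemma lt_irrefl: "\<not> lt a a" unfolding lt_def by simp
lemma lt_trans: "lt a b \<Longrightarrow> lt b c \<Longrightarrow> lt a c" unfolding lt_def by auto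
lemma lt_total: "a \<noteq> b \<Longrightarrow> lt a b \<or> lt b a"
  unfolding lt_def using key_inj by (metis linorder_neqE)

lemma map2_add_less:
  fixes xs ys zs :: "nat list"
  shows "length xs = length zs \<Longrightarrow> length ys = length zs \<Longrightarrow> xs < ys \<Longrightarrow>
    map2 (+) xs zs < map2 (+) ys zs"
proof (induction zs arbitrary: xs ys)
  case Nil then show ?case by simp
next
  case (Cons z zs)
  then obtain x xs' y ys' where "xs = x # xs'" "ys = y # ys'"
    by (metis length_Suc_conv)
  with Cons show ?case by auto
qed

lemma key_add: "key (\<lambda>j. a j + b j) = map2 (+) (key a) (key b)"
proof -
  have "map (\<lambda>j. a j + b j) l = map2 (+) (map a l) (map b l)" for l :: "'a list"
    by (induction l) auto
  then show ?thesis unfolding key_def mdeg_def by (simp add: sum.distrib)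
qed

lemma lt_add: "lt a b \<Longrightarrow> lt (\<lambda>j. a j + d j) (\<lambda>j. b j + d j)"
  unfolding lt_def key_add by (rule map2_add_less) (auto simp: key_def)

lemma bounded_finite: "finite {a :: 'n::finite \<Rightarrow> nat. \<forall>j. a j \<le> n}"
proof -
  have "{a :: 'n::finite \<Rightarrow> nat. \<forall>j. a j \<le> n} = PiE UNIV (\<lambda>_. {0..n})"
    by (auto simp: PiE_UNIV_domain)
  then show ?thesis by (simp add: finite_PiE)
qed

lemma mdeg_ge: "a j \<le> mdeg a"
  unfolding mdeg_def by (rule member_le_sum) auto

lemma lt_below_finite: "finite {g. lt g a}"
  by (rule finite_subset[OF _ bounded_finite[of "mdeg a"]])
     (auto dest!: lt_deg intro: order_trans[OF mdeg_ge])

definition rank :: "('n::finite \<Rightarrow> nat) \<Rightarrow> nat" where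
  "rank a = card {g. lt g a}"

lemma rank_lt: "lt g a \<Longrightarrow> rank g < rank a"
  unfolding rank_def
proof (rule psubset_card_mono[OF lt_below_finite])
  assume "lt g a"
  then have "g \<in> {g. lt g a}" "g \<notin> {x. lt x g}" by (auto simp: lt_irrefl)
  moreover have "{x. lt x g} \<subseteq> {g. lt g a}" using \<open>lt g a\<close> by (auto intro: lt_trans)
  ultimately show "{x. lt x g} \<subset> {g. lt g a}" by blast
qed

interpretation VS: vector_space "\<lambda>(c::complex) (f::'a \<Rightarrow> complex). (\<lambda>x. c * f x)"
  by unfold_locales (auto simp: algebra_simps fun_eq_iff)

lemma mult_span:
  assumes "g \<in> VS.span A"
  shows "(\<lambda>x. m x * g x) \<in> VS.span ((\<lambda>f x. m x * f x) ` A)"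
  using assms
proof (induction rule: VS.span_induct_alt)
  case base
  then show ?case using VS.span_zero by (simp add: zero_fun_def)
next
  case (step c x y)
  have e: "(\<lambda>xa. m xa * ((\<lambda>xa. c * x xa) + y) xa) = (\<lambda>xa. c * (m xa * x xa)) + (\<lambda>xa. m xa * y xa)"
    by (auto simp: fun_eq_iff algebra_simps)
  have "(\<lambda>xa. m xa * x xa) \<in> VS.span ((\<lambda>f x. m x * f x) ` A)"
    by (rule VS.span_base) (use step in blast)
  then have "(\<lambda>xa. c * (m xa * x xa)) \<in> VS.span ((\<lambda>f x. m x * f x) ` A)"
    by (rule VS.span_scale)
  then show ?case unfolding e using step(2) by (rule VS.span_add)
qed

definition ev :: "('n::finite\<Rightarrow>complex) set \<Rightarrow> ('n\<Rightarrow>nat) \<Rightarrow> ('n\<Rightarrow>complex) \<Rightarrow> complex" where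
  "ev X a = (\<lambda>x. if x\<in>X then mon a x else 0)"

lemma mon_add: "mon (\<lambda>j. a j + b j) x = mon a x * mon b x"
  unfolding mon_def by (simp add: power_add prod.distrib)

lemma ev_mult: "(\<lambda>x. mon d x * ev X g x) = ev X (\<lambda>j. g j + d j)"
  by (auto simp: ev_def fun_eq_iff mon_add)

definition Sx :: "('n::finite\<Rightarrow>complex) set \<Rightarrow> ('n\<Rightarrow>nat) set" where
  "Sx X = {a. ev X a \<notin> VS.span (ev X ` {g. lt g a})}"

lemma ev_span_S: "ev X a \<in> VS.span (ev X ` {g \<in> Sx X. g = a \<or> lt g a})"
proof (induction a rule: measure_induct_rule[of rank])
  case (less a)
  show ?case
  proof (cases "a \<in> Sx X")
    case True
    then show ?thesis by (intro VS.span_base) auto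
  next
    case False
    then have h: "ev X a \<in> VS.span (ev X ` {g. lt g a})" by (auto simp: Sx_def)
    have "ev X ` {g. lt g a} \<subseteq> VS.span (ev X ` {g \<in> Sx X. g = a \<or> lt g a})"
    proof safe
      fix g assume "lt g a"
      then have "ev X g \<in> VS.span (ev X ` {h \<in> Sx X. h = g \<or> lt h g})"
        using less rank_lt by blast
      also have "\<dots> \<subseteq> VS.span (ev X ` {g \<in> Sx X. g = a \<or> lt g a})"
        by (rule VS.span_mono) (use \<open>lt g a\<close> lt_trans in blast)
      finally show "ev X g \<in> VS.span (ev X ` {g \<in> Sx X. g = a \<or> lt g a})" .
    qed
    then have "VS.span (ev X ` {g. lt g a}) \<subseteq> VS.span (ev X ` {g \<in> Sx X. g = a \<or> lt g a})"
      by (rule VS.span_minimal) (rule VS.subspace_span)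
    with h show ?thesis by blast
  qed
qed

lemma Sx_lower:
  assumes a: "a \<in> Sx X" and le: "\<And>j. b j \<le> a j"
  shows "b \<in> Sx X"
proof (rule ccontr)
  assume "b \<notin> Sx X"
  then have h: "ev X b \<in> VS.span (ev X ` {g. lt g b})" by (auto simp: Sx_def)
  define d where "d = (\<lambda>j. a j - b j)"
  have ad: "a = (\<lambda>j. b j + d j)" using le by (auto simp: d_def fun_eq_iff)
  from mult_span[OF h, of "mon d"]
  have "ev X a \<in> VS.span ((\<lambda>f x. mon d x * f x) ` ev X ` {g. lt g b})"
    by (simp add: ev_mult ad)
  also have "(\<lambda>f x. mon d x * f x) ` ev X ` {g. lt g b} \<subseteq> ev X ` {g. lt g a}"
  proof safe
    fix g assume "lt g b"
    then show "(\<lambda>x. mon d x * ev X g x) \<in> ev X ` {g. lt g a}"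
      unfolding ev_mult ad using lt_add by blast
  qed
  then have "VS.span ((\<lambda>f x. mon d x * f x) ` ev X ` {g. lt g b}) \<subseteq> VS.span (ev X ` {g. lt g a})"
    by (rule VS.span_mono)
  finally show False using a by (auto simp: Sx_def)
qed

lemma Sx_inj: "inj_on (ev X) (Sx X)"
proof (rule inj_onI, rule ccontr)
  fix a b assume ab: "a \<in> Sx X" "b \<in> Sx X" "ev X a = ev X b" "a \<noteq> b"
  have *: "ev X b \<in> VS.span (ev X ` {g. lt g b})" if "lt a b" "ev X a = ev X b" for a b
    by (rule VS.span_base) (use that in \<open>metis (mono_tags) image_eqI mem_Collect_eq\<close>)
  from lt_total[OF ab(4)] show False
  proof
    assume "lt a b" then show False using *[of a b] ab(2,3) by (auto simp: Sx_def)
  next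
    assume "lt b a" then show False using *[of b a] ab(1,3) by (auto simp: Sx_def)
  qed
qed

lemma Sx_indep:
  assumes "finite F" "F \<subseteq> Sx X"
  shows "VS.independent (ev X ` F)"
  using assms
proof (induction "card F" arbitrary: F rule: less_induct)
  case less
  show ?case
  proof (cases "F = {}")
    case True then show ?thesis by (simp add: VS.independent_empty)
  next
    case False
    define m where "m = Max (key ` F)"
    have "m \<in> key ` F" unfolding m_def using less.prems False by (intro Max_in) auto
    then obtain a where a: "a \<in> F" "key a = m" by auto
    have lta: "lt g a" if "g \<in> F - {a}" for g
    proof -
      have "key g \<le> m" unfolding m_def using that less.prems by (intro Max_ge) auto
      moreover have "key g \<noteq> key a" using key_inj that by blast
      ultimately show ?thesis unfolding lt_def using a by auto
    qed
    have "card (F - {a}) < card F" using less.prems(1) a(1) by (rule card_Diff1_less)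
    then have IH: "VS.independent (ev X ` (F - {a}))"
      using less.prems by (intro less.hyps) auto
    have notin: "ev X a \<notin> VS.span (ev X ` (F - {a}))"
    proof
      assume "ev X a \<in> VS.span (ev X ` (F - {a}))"
      also have "\<dots> \<subseteq> VS.span (ev X ` {g. lt g a})"
        by (rule VS.span_mono) (use lta in blast)
      finally show False using a less.prems by (auto simp: Sx_def)
    qed
    have eq: "ev X ` F = insert (ev X a) (ev X ` (F - {a}))" using a by auto
    show ?thesis unfolding eq by (rule VS.independent_insertI[OF notin IH])
  qed
qed

lemma sum_fun_apply: "(\<Sum>i\<in>I. f i) x = (\<Sum>i\<in>I. f i x)"
  by (induction I rule: infinite_finite_induct) auto

lemma Sx_card:
  assumes X: "finite X" and F: "finite F" "F \<subseteq> Sx X"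
  shows "card F \<le> card X"
proof -
  define T where "T = (\<lambda>x y. if y = x then (1::complex) else 0) ` X"
  have "ev X ` F \<subseteq> VS.span T"
  proof safe
    fix a assume "a \<in> F"
    have "ev X a = (\<Sum>x\<in>X. (\<lambda>y. mon a x * (if y = x then 1 else 0)))"
    proof (rule ext)
      fix y
      have "(\<Sum>x\<in>X. (\<lambda>y. mon a x * (if y = x then 1 else 0))) y = (\<Sum>x\<in>X. if y = x then mon a x else 0)"
        unfolding sum_fun_apply by (rule sum.cong) auto
      also have "\<dots> = ev X a y" using X by (simp add: sum.delta' ev_def)
      finally show "ev X a y = (\<Sum>x\<in>X. (\<lambda>y. mon a x * (if y = x then 1 else 0))) y" ..
    qed
    also have "\<dots> \<in> VS.span T"
      by (intro VS.span_sum VS.span_scale[of "\<lambda>y. if y = _ then 1 else 0"] VS.span_base) (auto simp: T_def)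
    finally show "ev X a \<in> VS.span T" .
  qed
  from VS.independent_span_bound[OF _ Sx_indep[OF F] this] X
  have "card (ev X ` F) \<le> card T" by (auto simp: T_def)
  also have "\<dots> \<le> card X" unfolding T_def using X by (rule card_image_le)
  also have "card (ev X ` F) = card F"
    using inj_on_subset[OF Sx_inj F(2)] by (rule card_image)
  finally show ?thesis by simp
qed

lemma Sx_hyp:
  assumes X: "finite X" "card X \<le> N" and a: "a \<in> Sx X"
  shows "a \<in> hyperbolic_cross N"
proof -
  define B where "B = {b. \<forall>j. b j \<le> a j}"
  have Beq: "B = PiE UNIV (\<lambda>j. {0..a j})" by (auto simp: B_def PiE_UNIV_domain)
  have "finite B" unfolding Beq by (simp add: finite_PiE)
  moreover have "B \<subseteq> Sx X" unfolding B_def using Sx_lower[OF a] by blast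
  ultimately have "card B \<le> card X" using Sx_card[OF X(1)] by blast
  moreover have "card B = (\<Prod>j\<in>UNIV. a j + 1)" unfolding Beq by (simp add: card_PiE)
  ultimately show ?thesis using X by (simp add: hyperbolic_cross_def)
qed

lemma mpoly_eval_sum:
  assumes "finite K" "Poly_Mapping.keys p \<subseteq> K"
  shows "mpoly_eval p x = (\<Sum>a\<in>K. Poly_Mapping.lookup p a * mon a x)"
  unfolding mpoly_eval_def mon_def
  by (rule sum.mono_neutral_left[OF assms]) (auto simp: in_keys_iff)

lemma deg_eq: "p \<noteq> 0 \<Longrightarrow> mpoly_deg p = int (Max (mdeg ` Poly_Mapping.keys p))"
  by (simp add: mpoly_deg_def mdeg_def[abs_def])

lemma deg_key:
  assumes "a \<in> Poly_Mapping.keys p" shows "int (mdeg a) \<le> mpoly_deg p"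
proof -
  have "p \<noteq> 0" using assms by auto
  moreover have "mdeg a \<le> Max (mdeg ` Poly_Mapping.keys p)" using assms by (intro Max_ge) auto
  ultimately show ?thesis by (simp add: deg_eq)
qed

lemma deg_le:
  assumes "\<And>a. a \<in> Poly_Mapping.keys p \<Longrightarrow> mdeg a \<le> d"
  shows "mpoly_deg p \<le> int d"
proof (cases "p = 0")
  case False
  then have "Poly_Mapping.keys p \<noteq> {}" by simp
  then show ?thesis using False assms unfolding mpoly_deg_def mdeg_def by auto
qed (simp add: mpoly_deg_def)

theorem part1: "deg_red_univ_interp_space (monomial_span (hyperbolic_cross N :: ('n::finite \<Rightarrow> nat) set)) N"
  unfolding deg_red_univ_interp_space_def
proof (intro allI impI)
  fix X :: "('n \<Rightarrow> complex) set" and q :: "'n mpoly"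
  assume "finite X \<and> card X \<le> N"
  then have X: "finite X" "card X \<le> N" by auto
  show "\<exists>p\<in>monomial_span (hyperbolic_cross N). (\<forall>x\<in>X. mpoly_eval p x = mpoly_eval q x) \<and> mpoly_deg p \<le> mpoly_deg q"
  proof (cases "q = 0")
    case True
    then show ?thesis by (intro bexI[of _ 0]) (auto simp: monomial_span_def)
  next
    case False
    define d where "d = nat (mpoly_deg q)"
    have dq: "mpoly_deg q = int d" using False unfolding d_def mpoly_deg_def by simp
    have kd: "mdeg a \<le> d" if "a \<in> Poly_Mapping.keys q" for a
      using deg_key[OF that] dq by simp
    define G where "G = {g \<in> Sx X. mdeg g \<le> d}"
    have finG: "finite G"
      by (rule finite_subset[OF _ bounded_finite[of d]]) (auto simp: G_def intro: order_trans[OF mdeg_ge])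
    have injG: "inj_on (ev X) G" by (rule inj_on_subset[OF Sx_inj]) (auto simp: G_def)
    define vq where "vq = (\<lambda>x. if x\<in>X then mpoly_eval q x else 0)"
    have vq_eq: "vq = (\<Sum>a\<in>Poly_Mapping.keys q. (\<lambda>x. Poly_Mapping.lookup q a * ev X a x))"
    proof (rule ext)
      fix x
      show "vq x = (\<Sum>a\<in>Poly_Mapping.keys q. (\<lambda>x. Poly_Mapping.lookup q a * ev X a x)) x"
        unfolding sum_fun_apply vq_def ev_def
        by (simp add: mpoly_eval_sum[OF finite_keys order_refl])
    qed
    have "vq \<in> VS.span (ev X ` G)"
      unfolding vq_eq
    proof (rule VS.span_sum)
      fix a assume a: "a \<in> Poly_Mapping.keys q"
      have "ev X a \<in> VS.span (ev X ` {g \<in> Sx X. g = a \<or> lt g a})" by (rule ev_span_S)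
      also have "\<dots> \<subseteq> VS.span (ev X ` G)"
      proof (intro VS.span_mono image_mono subsetI)
        fix g assume "g \<in> {g \<in> Sx X. g = a \<or> lt g a}"
        then show "g \<in> G" using kd[OF a] lt_deg[of g a] by (auto simp: G_def)
      qed
      finally show "(\<lambda>x. Poly_Mapping.lookup q a * ev X a x) \<in> VS.span (ev X ` G)"
        by (rule VS.span_scale)
    qed
    then obtain u where u: "vq = (\<Sum>v\<in>ev X ` G. (\<lambda>x. u v * v x))"
      using VS.span_finite[of "ev X ` G"] finG by auto
    have u2: "vq = (\<Sum>g\<in>G. (\<lambda>x. u (ev X g) * ev X g x))"
      unfolding u by (simp add: sum.reindex[OF injG])
    define c where "c = (\<lambda>g. if g \<in> G then u (ev X g) else 0)"
    define p :: "'n mpoly" where "p = Abs_poly_mapping c"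
    have "finite {g. c g \<noteq> 0}" by (rule finite_subset[OF _ finG]) (auto simp: c_def split: if_splits)
    then have lp: "Poly_Mapping.lookup p = c" unfolding p_def by simp
    have kp: "Poly_Mapping.keys p \<subseteq> G" by (auto simp: in_keys_iff lp c_def split: if_splits)
    show ?thesis
    proof (intro bexI conjI ballI)
      show "p \<in> monomial_span (hyperbolic_cross N)"
        using kp Sx_hyp[OF X] by (auto simp: monomial_span_def G_def)
      show "mpoly_deg p \<le> mpoly_deg q" unfolding dq
        by (rule deg_le) (use kp in \<open>auto simp: G_def\<close>)
      fix x assume x: "x \<in> X"
      have "mpoly_eval p x = (\<Sum>g\<in>G. u (ev X g) * mon g x)"
        unfolding mpoly_eval_sum[OF finG kp] lp c_def by (rule sum.cong) auto
      also have "\<dots> = vq x" unfolding u2 sum_fun_apply using x by (simp add: ev_def)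
      also have "\<dots> = mpoly_eval q x" using x by (simp add: vq_def)
      finally show "mpoly_eval p x = mpoly_eval q x" .
    qed
  qed
qed


definition zr :: "nat \<Rightarrow> complex" where
  "zr k = exp (2 * of_real pi * \<i> / of_nat (Suc k))"

lemma zr_pow: "zr k ^ r = 1 \<longleftrightarrow> Suc k dvd r"
proof -
  have "zr k ^ r = exp (of_nat r * (2 * of_real pi * \<i> / of_nat (Suc k)))"
    unfolding zr_def by (rule exp_of_nat_mult[symmetric])
  also have "\<dots> = exp (2 * of_real pi * \<i> * of_nat r / of_nat (Suc k))"
    by (simp add: field_simps)
  finally show ?thesis using complex_root_unity_eq_1[of "Suc k" r] by simp
qed

lemma zr_nz: "zr k \<noteq> 0" by (simp add: zr_def)

definition nodes :: "nat \<Rightarrow> complex set" where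
  "nodes k = (\<lambda>i. zr k ^ i) ` {..k}"

lemma nodes_inj: "inj_on (\<lambda>i. zr k ^ i) {..k}"
proof -
  have *: False if "i < l" "l \<le> k" "zr k ^ i = zr k ^ l" for i l
  proof -
    have "zr k ^ l = zr k ^ i * zr k ^ (l - i)" using \<open>i < l\<close> by (simp add: power_add[symmetric])
    then have "zr k ^ l * 1 = zr k ^ l * zr k ^ (l - i)" using that(3) by simp
    then have "zr k ^ (l - i) = 1" using zr_nz by (metis mult_left_cancel power_not_zero)
    then have "Suc k dvd (l - i)" by (simp add: zr_pow)
    moreover have "0 < l - i" "l - i < Suc k" using that by auto
    ultimately show False by (meson nat_dvd_not_less)
  qed
  show ?thesis
    by (rule inj_onI) (metis * atMost_iff linorder_neqE_nat)
qed

lemma card_nodes: "card (nodes k) = Suc k"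
  unfolding nodes_def using card_image[OF nodes_inj] by simp

lemma nodes_sum:
  "(\<Sum>t\<in>nodes k. t ^ (m + 1)) = (if m < k then 0 else if m = k then of_nat (Suc k) else (\<Sum>t\<in>nodes k. t ^ (m + 1)))"
proof -
  define w where "w = zr k ^ (m + 1)"
  have "(\<Sum>t\<in>nodes k. t ^ (m + 1)) = (\<Sum>i\<in>{..k}. (zr k ^ i) ^ (m + 1))"
    unfolding nodes_def by (simp add: sum.reindex[OF nodes_inj])
  also have "\<dots> = (\<Sum>i<Suc k. w ^ i)"
    unfolding w_def lessThan_Suc_atMost by (rule sum.cong) (simp, metis power_mult mult.commute)
  also have "\<dots> = (if w = 1 then of_nat (Suc k) else (1 - w ^ Suc k) / (1 - w))"
    by (rule sum_gp_strict)
  finally have e: "(\<Sum>t\<in>nodes k. t ^ (m + 1)) = (if w = 1 then of_nat (Suc k) else (1 - w ^ Suc k) / (1 - w))" .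
  have wk: "w ^ Suc k = 1" unfolding w_def
    by (metis power_mult mult.commute zr_pow dvd_refl power_one)
  show ?thesis
  proof (cases "m < k")
    case True
    then have "w \<noteq> 1" unfolding w_def zr_pow using nat_dvd_not_less[of "Suc m" "Suc k"] by auto
    then show ?thesis using e wk True by simp
  next
    case False
    show ?thesis
    proof (cases "m = k")
      case True
      then have "w = 1" unfolding w_def zr_pow by simp
      then show ?thesis using e True by simp
    qed (use False in simp)
  qed
qed

definition grid :: "('n::finite \<Rightarrow> nat) \<Rightarrow> ('n \<Rightarrow> complex) set" where
  "grid a = PiE UNIV (\<lambda>j. nodes (a j))"

definition TT :: "('n::finite \<Rightarrow> nat) \<Rightarrow> ('n \<Rightarrow> nat) \<Rightarrow> complex" where
  "TT a b = (\<Sum>x\<in>grid a. (\<Prod>j\<in>UNIV. x j) * mon b x)"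

lemma finite_nodes: "finite (nodes k)" by (simp add: nodes_def)

lemma TT_prod: "TT a b = (\<Prod>j\<in>UNIV. \<Sum>t\<in>nodes (a j). t ^ (b j + 1))"
proof -
  have "TT a b = (\<Sum>x\<in>grid a. \<Prod>j\<in>UNIV. x j ^ (b j + 1))"
    unfolding TT_def mon_def by (simp add: prod.distrib[symmetric])
  also have "\<dots> = (\<Prod>j\<in>UNIV. \<Sum>t\<in>nodes (a j). t ^ (b j + 1))"
    unfolding grid_def by (rule prod_sum_PiE[symmetric]) (auto simp: finite_nodes)
  finally show ?thesis .
qed

lemma TT_zero: "b j < a j \<Longrightarrow> TT a b = 0"
  unfolding TT_prod by (rule prod_zero) (use nodes_sum[of "b j" "a j"] in auto)

lemma one_plus_nz: "(1::complex) + of_nat n \<noteq> 0"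
  using of_nat_neq_0[of n] by (simp only: of_nat_Suc)

lemma TT_self: "TT a a \<noteq> 0"
  using one_plus_nz unfolding TT_prod using nodes_sum[of "a j" "a j" for j] by (auto simp: prod_zero_iff)

lemma card_grid: "card (grid a) = (\<Prod>j\<in>UNIV. a j + 1)"
  unfolding grid_def by (simp add: card_PiE card_nodes)

lemma finite_grid: "finite (grid a)"
  unfolding grid_def by (simp add: finite_PiE finite_nodes)

lemma L_eval: "(\<Sum>x\<in>grid a. (\<Prod>j\<in>UNIV. x j) * mpoly_eval p x) =
   (\<Sum>b\<in>Poly_Mapping.keys p. Poly_Mapping.lookup p b * TT a b)"
  unfolding mpoly_eval_def TT_def mon_def[symmetric]
  by (simp add: sum_distrib_left sum_distrib_right sum.swap[of _ "grid a"] mult_ac)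

theorem part2:
  assumes A: "monomial_deg_red_univ_interp_set A N"
    and a: "(a :: 'n::finite \<Rightarrow> nat) \<in> hyperbolic_cross N"
  shows "a \<in> A"
proof -
  define q :: "'n mpoly" where "q = Poly_Mapping.single a 1"
  have fin: "finite (grid a) \<and> card (grid a) \<le> N"
    using a by (simp add: finite_grid card_grid hyperbolic_cross_def)
  have "\<exists>p\<in>monomial_span A. (\<forall>x\<in>grid a. mpoly_eval p x = mpoly_eval q x) \<and> mpoly_deg p \<le> mpoly_deg q"
    using A[unfolded monomial_deg_red_univ_interp_set_def deg_red_univ_interp_space_def, rule_format, OF fin] .
  then obtain p where p: "p \<in> monomial_span A" "\<And>x. x \<in> grid a \<Longrightarrow> mpoly_eval p x = mpoly_eval q x"
     "mpoly_deg p \<le> mpoly_deg q"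
    by auto
  have kq: "Poly_Mapping.keys q = {a}" by (simp add: q_def)
  have "q \<noteq> 0" using kq by auto
  then have dq: "mpoly_deg q = int (mdeg a)" by (simp add: deg_eq kq)
  have evq: "mpoly_eval q x = mon a x" for x
    unfolding mpoly_eval_def kq mon_def by (simp add: q_def)
  have lt: "\<exists>j. b j < a j" if "b \<in> Poly_Mapping.keys p" "b \<noteq> a" for b
  proof (rule ccontr)
    assume "\<not> ?thesis"
    then have le: "\<forall>j\<in>UNIV. a j \<le> b j" by (auto simp: not_less)
    from that(2) obtain j where "a j \<noteq> b j" by (metis ext)
    with le have "\<exists>j\<in>UNIV. a j < b j" by (auto simp: order.order_iff_strict)
    then have "mdeg a < mdeg b" unfolding mdeg_def using le by (intro sum_strict_mono_ex1) auto
    moreover have "int (mdeg b) \<le> int (mdeg a)" using deg_key[OF that(1)] p(3) dq by simp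
    ultimately show False by simp
  qed
  have "(\<Sum>x\<in>grid a. (\<Prod>j\<in>UNIV. x j) * mpoly_eval p x) = (\<Sum>x\<in>grid a. (\<Prod>j\<in>UNIV. x j) * mpoly_eval q x)"
    using p(2) by simp
  also have "\<dots> = TT a a" unfolding evq TT_def ..
  finally have e: "(\<Sum>b\<in>Poly_Mapping.keys p. Poly_Mapping.lookup p b * TT a b) = TT a a"
    unfolding L_eval .
  have "(\<Sum>b\<in>Poly_Mapping.keys p. Poly_Mapping.lookup p b * TT a b)
        = (\<Sum>b\<in>Poly_Mapping.keys p. if b = a then Poly_Mapping.lookup p a * TT a a else 0)"
  proof (rule sum.cong[OF refl])
    fix b assume b: "b \<in> Poly_Mapping.keys p"
    show "Poly_Mapping.lookup p b * TT a b = (if b = a then Poly_Mapping.lookup p a * TT a a else 0)"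
    proof (cases "b = a")
      case False
      then obtain j where "b j < a j" using lt[OF b] by blast
      then have "TT a b = 0" by (rule TT_zero)
      then show ?thesis using False by simp
    qed simp
  qed
  also have "\<dots> = (if a \<in> Poly_Mapping.keys p then Poly_Mapping.lookup p a * TT a a else 0)"
    by (simp add: sum.delta)
  finally have "a \<in> Poly_Mapping.keys p" using e TT_self[of a] by (auto split: if_splits)
  then show ?thesis using p(1) by (auto simp: monomial_span_def)
qed

theorem corollary23:
  fixes N :: nat
  assumes "N \<ge> 1"
  shows "monomial_deg_red_univ_interp_set (hyperbolic_cross N :: ('n::finite \<Rightarrow> nat) set) N
         \<and> (\<forall>A :: ('n \<Rightarrow> nat) set. monomial_deg_red_univ_interp_set A N \<longrightarrow> hyperbolic_cross N \<subseteq> A)"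
proof (intro conjI allI impI subsetI)
  show "monomial_deg_red_univ_interp_set (hyperbolic_cross N :: ('n::finite \<Rightarrow> nat) set) N"
    unfolding monomial_deg_red_univ_interp_set_def by (rule part1)
next
  fix A :: "('n \<Rightarrow> nat) set" and a :: "'n \<Rightarrow> nat"
  assume "monomial_deg_red_univ_interp_set A N" "a \<in> hyperbolic_cross N"
  then show "a \<in> A" by (rule part2)
qed

end
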